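(* Let $V$ be the vector module of $gl(m|n)$ and $V(\Lambda)$ a finite-dimensional irreducible $gl(m|n)$-module with maximal $\mathbb{Z}$-graded component $V_0(\Lambda)$. Then $V\otimes V(\Lambda)$ is cyclically generated as an $L$-module by the $L_0$-submodule $V\otimes V_0(\Lambda)$, and $V\otimes V(\Lambda)=U(L_-)\,\big(V\otimes V_0(\Lambda)\big)$.
   Context: $L=gl(m|n)$ over $\mathbb{C}$, with homogeneous basis $E_{pq}$ ($1\le p,q\le m+n$), parity $(p)+(q)$ where $(p)=0$ for $p\le m$, $(p)=1$ otherwise, and graded bracket $[E_{pq},E_{rs}]=\delta_{qr}E_{ps}-(-1)^{((p)+(q))((r)+(s))}\delta_{ps}E_{rq}$. $L$ has the $\mathbb{Z}$-grading $L=L_-\oplus L_0\oplus L_+$ with $L_0=gl(m)\oplus gl(n)$ the even part, $L_+=\mathrm{span}\{E_{pq}:p\le m<q\}$, $L_-=\mathrm{span}\{E_{qp}:p\le m<q\}$. The vector module $V$ has basis $|s\rangle$ with $E_{pq}|s\rangle=\delta_{qs}|p\rangle$, and $L$ acts on tensor products via the coproduct $\Delta(x)=x\otimes1+1\otimes x$ with the usual sign rule. The maximal $\mathbb{Z}$-graded component $V_0(\Lambda)$ of $V(\Lambda)$ is the irreducible $L_0$-submodule generated by the highest weight vector (it is annihilated by $L_+$). *)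

theory Defs
  imports Complex_Main "HOL-Library.Function_Algebras"
begin

text \<open>Indices p,q of the basis E_pq of gl(m|n) range over 1..m+n.
 A gl(m|n)-module is given by a complex vector space (the whole type 'w with scalar
 multiplication sc), a Z2-grading W0 (+) W1, and operators rho p q (action of E_pq).\<close>

definition par :: "nat \<Rightarrow> nat \<Rightarrow> nat" where
  "par m p = (if p \<le> m then 0 else 1)"

definition sgn_c :: "nat \<Rightarrow> complex" where
  "sgn_c k = (-1) ^ k"

definition idx :: "nat \<Rightarrow> nat \<Rightarrow> nat set" where
  "idx m n = {1..m+n}"

text \<open>Smallest subspace containing S and closed under the operators in ops;
 for ops spanning a subalgebra K of L this is U(K) S.\<close>
inductive_set gen_sub :: "(complex \<Rightarrow> 'a::ab_group_add \<Rightarrow> 'a) \<Rightarrow> ('a \<Rightarrow> 'a) set \<Rightarrow> 'a set \<Rightarrow> 'a set"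
  for sc :: "complex \<Rightarrow> 'a \<Rightarrow> 'a" and ops :: "('a \<Rightarrow> 'a) set" and S :: "'a set" where
  base: "x \<in> S \<Longrightarrow> x \<in> gen_sub sc ops S"
| zero: "0 \<in> gen_sub sc ops S"
| add: "x \<in> gen_sub sc ops S \<Longrightarrow> y \<in> gen_sub sc ops S \<Longrightarrow> x + y \<in> gen_sub sc ops S"
| smul: "x \<in> gen_sub sc ops S \<Longrightarrow> sc c x \<in> gen_sub sc ops S"
| oper: "f \<in> ops \<Longrightarrow> x \<in> gen_sub sc ops S \<Longrightarrow> f x \<in> gen_sub sc ops S"

definition glmn_module ::
  "nat \<Rightarrow> nat \<Rightarrow> (complex \<Rightarrow> 'w::ab_group_add \<Rightarrow> 'w) \<Rightarrow> (nat \<Rightarrow> nat \<Rightarrow> 'w \<Rightarrow> 'w) \<Rightarrow> 'w set \<Rightarrow> 'w set \<Rightarrow> bool" where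
  "glmn_module m n sc rho W0 W1 \<longleftrightarrow>
     vector_space sc \<and>
     module.subspace sc W0 \<and> module.subspace sc W1 \<and> W0 \<inter> W1 = {0} \<and>
     (\<forall>w. \<exists>a\<in>W0. \<exists>b\<in>W1. w = a + b) \<and>
     (\<forall>p\<in>idx m n. \<forall>q\<in>idx m n. Vector_Spaces.linear sc sc (rho p q)) \<and>
     (\<forall>p\<in>idx m n. \<forall>q\<in>idx m n.
        (if par m p = par m q then rho p q ` W0 \<subseteq> W0 \<and> rho p q ` W1 \<subseteq> W1
         else rho p q ` W0 \<subseteq> W1 \<and> rho p q ` W1 \<subseteq> W0)) \<and>
     (\<forall>p\<in>idx m n. \<forall>q\<in>idx m n. \<forall>r\<in>idx m n. \<forall>s\<in>idx m n. \<forall>w.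
        rho p q (rho r s w)
          - sc (sgn_c ((par m p + par m q) * (par m r + par m s))) (rho r s (rho p q w))
        = (if q = r then rho p s w else 0)
          - sc (sgn_c ((par m p + par m q) * (par m r + par m s)))
               (if p = s then rho r q w else 0))"

definition fin_dim :: "(complex \<Rightarrow> 'w::ab_group_add \<Rightarrow> 'w) \<Rightarrow> bool" where
  "fin_dim sc \<longleftrightarrow> (\<exists>B. finite B \<and> module.span sc B = UNIV)"

definition glmn_irreducible ::
  "nat \<Rightarrow> nat \<Rightarrow> (complex \<Rightarrow> 'w::ab_group_add \<Rightarrow> 'w) \<Rightarrow> (nat \<Rightarrow> nat \<Rightarrow> 'w \<Rightarrow> 'w) \<Rightarrow> 'w set \<Rightarrow> 'w set \<Rightarrow> bool" where
  "glmn_irreducible m n sc rho W0 W1 \<longleftrightarrow>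
     (UNIV :: 'w set) \<noteq> {0} \<and>
     (\<forall>S. module.subspace sc S \<and> (\<forall>p\<in>idx m n. \<forall>q\<in>idx m n. rho p q ` S \<subseteq> S) \<and>
          (\<forall>w\<in>S. \<exists>a\<in>S \<inter> W0. \<exists>b\<in>S \<inter> W1. w = a + b)
          \<longrightarrow> S = {0} \<or> S = UNIV)"

definition hw_vector ::
  "nat \<Rightarrow> nat \<Rightarrow> (complex \<Rightarrow> 'w::ab_group_add \<Rightarrow> 'w) \<Rightarrow> (nat \<Rightarrow> nat \<Rightarrow> 'w \<Rightarrow> 'w) \<Rightarrow> (nat \<Rightarrow> complex) \<Rightarrow> 'w \<Rightarrow> bool" where
  "hw_vector m n sc rho Lam v \<longleftrightarrow>
     v \<noteq> 0 \<and> (\<forall>p\<in>idx m n. rho p p v = sc (Lam p) v) \<and>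
     (\<forall>p\<in>idx m n. \<forall>q\<in>idx m n. p < q \<longrightarrow> rho p q v = 0)"

definition L0_ops :: "nat \<Rightarrow> nat \<Rightarrow> (nat \<Rightarrow> nat \<Rightarrow> 'a \<Rightarrow> 'a) \<Rightarrow> ('a \<Rightarrow> 'a) set" where
  "L0_ops m n act = {act p q | p q. p \<in> idx m n \<and> q \<in> idx m n \<and> par m p = par m q}"

definition Lminus_ops :: "nat \<Rightarrow> nat \<Rightarrow> (nat \<Rightarrow> nat \<Rightarrow> 'a \<Rightarrow> 'a) \<Rightarrow> ('a \<Rightarrow> 'a) set" where
  "Lminus_ops m n act = {act q p | p q. 1 \<le> p \<and> p \<le> m \<and> m < q \<and> q \<le> m + n}"

definition L_ops :: "nat \<Rightarrow> nat \<Rightarrow> (nat \<Rightarrow> nat \<Rightarrow> 'a \<Rightarrow> 'a) \<Rightarrow> ('a \<Rightarrow> 'a) set" where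
  "L_ops m n act = {act p q | p q. p \<in> idx m n \<and> q \<in> idx m n}"

definition V0 :: "nat \<Rightarrow> nat \<Rightarrow> (complex \<Rightarrow> 'w::ab_group_add \<Rightarrow> 'w) \<Rightarrow> (nat \<Rightarrow> nat \<Rightarrow> 'w \<Rightarrow> 'w) \<Rightarrow> 'w \<Rightarrow> 'w set" where
  "V0 m n sc rho v = gen_sub sc (L0_ops m n rho) {v}"

text \<open>Tensor product V \<otimes> W with V the vector module (basis |s>, s = 1..m+n):
 an element sum_s |s> \<otimes> t s is represented by the function t (zero outside 1..m+n).\<close>
definition tensor_space :: "nat \<Rightarrow> nat \<Rightarrow> (nat \<Rightarrow> 'w::zero) set" where
  "tensor_space m n = {t. \<forall>r. r \<notin> idx m n \<longrightarrow> t r = 0}"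

definition tens_sc :: "(complex \<Rightarrow> 'w \<Rightarrow> 'w) \<Rightarrow> complex \<Rightarrow> (nat \<Rightarrow> 'w) \<Rightarrow> (nat \<Rightarrow> 'w)" where
  "tens_sc sc c t = (\<lambda>r. sc c (t r))"

text \<open>Coproduct action with sign rule:
 E_pq (|s> \<otimes> w) = delta_qs |p> \<otimes> w + (-1)^(((p)+(q))(s)) |s> \<otimes> E_pq w.\<close>
definition tens_act ::
  "nat \<Rightarrow> nat \<Rightarrow> (complex \<Rightarrow> 'w::ab_group_add \<Rightarrow> 'w) \<Rightarrow> (nat \<Rightarrow> nat \<Rightarrow> 'w \<Rightarrow> 'w) \<Rightarrow> nat \<Rightarrow> nat \<Rightarrow> (nat \<Rightarrow> 'w) \<Rightarrow> (nat \<Rightarrow> 'w)" where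
  "tens_act m n sc rho p q t = (\<lambda>r. if r \<in> idx m n then
       (if r = p then t q else 0) + sc (sgn_c ((par m p + par m q) * par m r)) (rho p q (t r))
     else 0)"

definition tensor_V0 :: "nat \<Rightarrow> nat \<Rightarrow> (complex \<Rightarrow> 'w::ab_group_add \<Rightarrow> 'w) \<Rightarrow> (nat \<Rightarrow> nat \<Rightarrow> 'w \<Rightarrow> 'w) \<Rightarrow> 'w \<Rightarrow> (nat \<Rightarrow> 'w) set" where
  "tensor_V0 m n sc rho v = {t \<in> tensor_space m n. \<forall>r. t r \<in> V0 m n sc rho v}"

end

theory Submission imports Defs begin

lemma gen_sub_minimal:
  assumes "S \<subseteq> X" "0 \<in> X" "\<And>x y. x \<in> X \<Longrightarrow> y \<in> X \<Longrightarrow> x + y \<in> X"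
    "\<And>c x. x \<in> X \<Longrightarrow> sc c x \<in> X" "\<And>f x. f \<in> ops \<Longrightarrow> x \<in> X \<Longrightarrow> f x \<in> X"
  shows "gen_sub sc ops S \<subseteq> X"
proof
  fix x assume "x \<in> gen_sub sc ops S" then show "x \<in> X"
  proof (induction rule: gen_sub.induct)
    case (base x) then show ?case using assms(1) by blast
  next
    case zero then show ?case by (rule assms(2))
  next
    case (add x y) then show ?case using assms(3) by blast
  next
    case (smul x c) then show ?case using assms(4) by blast
  next
    case (oper f x) then show ?case using assms(5) by blast
  qed
qed

lemma gen_sub_mono_ops:
  assumes "ops \<subseteq> ops'" shows "gen_sub sc ops S \<subseteq> gen_sub sc ops' S"
proof (rule gen_sub_minimal)
  show "S \<subseteq> gen_sub sc ops' S" by (auto intro: gen_sub.base)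
  show "0 \<in> gen_sub sc ops' S" by (rule gen_sub.zero)
  show "x + y \<in> gen_sub sc ops' S" if "x \<in> gen_sub sc ops' S" "y \<in> gen_sub sc ops' S" for x y
    using that by (rule gen_sub.add)
  show "sc c x \<in> gen_sub sc ops' S" if "x \<in> gen_sub sc ops' S" for c x
    using that by (rule gen_sub.smul)
  show "f x \<in> gen_sub sc ops' S" if "f \<in> ops" "x \<in> gen_sub sc ops' S" for f x
    using that assms by (auto intro: gen_sub.oper)
qed

lemma gen_sub_sum:
  assumes "finite A" "\<And>a. a \<in> A \<Longrightarrow> f a \<in> gen_sub sc ops S"
  shows "sum f A \<in> gen_sub sc ops S"
  using assms by (induction A rule: finite_induct) (auto intro: gen_sub.zero gen_sub.add)

lemma sgn_c_sq: "sgn_c k * sgn_c k = 1"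
  by (simp add: sgn_c_def power_mult_distrib[symmetric])

lemma sgn_c_even: "sgn_c ((a + a) * b) = 1"
proof -
  have "(a + a) * b = 2 * (a * b)" by simp
  then show ?thesis by (simp add: sgn_c_def power_mult)
qed

definition WV :: "nat \<Rightarrow> nat \<Rightarrow> (complex \<Rightarrow> 'w::ab_group_add \<Rightarrow> 'w) \<Rightarrow> (nat \<Rightarrow> nat \<Rightarrow> 'w \<Rightarrow> 'w) \<Rightarrow> (nat \<Rightarrow> complex) \<Rightarrow> (nat \<Rightarrow> int) \<Rightarrow> 'w \<Rightarrow> bool" where
  "WV m n sc rho Lam d x \<longleftrightarrow> (\<forall>p\<in>idx m n. rho p p x = sc (Lam p + of_int (d p)) x)"

definition phi :: "nat \<Rightarrow> nat \<Rightarrow> (nat \<Rightarrow> int) \<Rightarrow> int" where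
  "phi m n d = (\<Sum>k\<in>idx m n. int k * d k)"

definition LowGen :: "nat \<Rightarrow> nat \<Rightarrow> (complex \<Rightarrow> 'w::ab_group_add \<Rightarrow> 'w) \<Rightarrow> (nat \<Rightarrow> nat \<Rightarrow> 'w \<Rightarrow> 'w) \<Rightarrow> (nat \<Rightarrow> complex) \<Rightarrow> nat \<Rightarrow> 'w set" where
  "LowGen m n sc rho Lam K = {x. \<exists>d. WV m n sc rho Lam d x \<and> 1 \<le> phi m n d \<and> phi m n d \<le> int K}"

definition Hop :: "nat \<Rightarrow> nat \<Rightarrow> (complex \<Rightarrow> 'w::ab_group_add \<Rightarrow> 'w) \<Rightarrow> (nat \<Rightarrow> nat \<Rightarrow> 'w \<Rightarrow> 'w) \<Rightarrow> 'w \<Rightarrow> 'w" where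
  "Hop m n sc rho x = (\<Sum>k\<in>idx m n. sc (of_nat k) (rho k k x))"

primrec Pop :: "(complex \<Rightarrow> 'w::ab_group_add \<Rightarrow> 'w) \<Rightarrow> ('w \<Rightarrow> 'w) \<Rightarrow> complex \<Rightarrow> nat \<Rightarrow> 'w \<Rightarrow> 'w" where
  "Pop sc H c0 0 x = x"
| "Pop sc H c0 (Suc j) x = H (Pop sc H c0 j x) - sc (c0 + of_nat (Suc j)) (Pop sc H c0 j x)"

lemma gen_sub_mono_S:
  assumes "S \<subseteq> S'" shows "gen_sub sc ops S \<subseteq> gen_sub sc ops S'"
proof (rule gen_sub_minimal)
  show "S \<subseteq> gen_sub sc ops S'" using assms by (auto intro: gen_sub.base)
  show "0 \<in> gen_sub sc ops S'" by (rule gen_sub.zero)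
  show "x + y \<in> gen_sub sc ops S'" if "x \<in> gen_sub sc ops S'" "y \<in> gen_sub sc ops S'" for x y
    using that by (rule gen_sub.add)
  show "sc c x \<in> gen_sub sc ops S'" if "x \<in> gen_sub sc ops S'" for c x
    using that by (rule gen_sub.smul)
  show "f x \<in> gen_sub sc ops S'" if "f \<in> ops" "x \<in> gen_sub sc ops S'" for f x
    using that by (rule gen_sub.oper)
qed

lemma finite_idx: "finite (idx m n)" by (simp add: idx_def)

lemma phi_shift:
  assumes "p \<in> idx m n" "q \<in> idx m n"
  shows "phi m n (\<lambda>k. d k + (if k = p then 1 else 0) - (if k = q then 1 else 0)) = phi m n d + int p - int q"
proof -
  have "(\<Sum>k\<in>idx m n. int k * (d k + (if k = p then 1 else 0) - (if k = q then 1 else 0)))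
     = (\<Sum>k\<in>idx m n. int k * d k + (if k = p then int p else 0) - (if k = q then int q else 0))"
    by (rule sum.cong) (auto simp: algebra_simps)
  also have "\<dots> = (\<Sum>k\<in>idx m n. int k * d k) + (\<Sum>k\<in>idx m n. (if k = p then int p else 0)) - (\<Sum>k\<in>idx m n. (if k = q then int q else 0))"
    by (simp only: sum.distrib sum_subtractf)
  also have "\<dots> = phi m n d + int p - int q"
    using assms finite_idx by (simp add: phi_def)
  finally show ?thesis by (simp add: phi_def)
qed

context
  fixes m n :: nat and sc :: "complex \<Rightarrow> 'w::ab_group_add \<Rightarrow> 'w"
    and rho :: "nat \<Rightarrow> nat \<Rightarrow> 'w \<Rightarrow> 'w" and W0 W1 :: "'w set"
  assumes M: "glmn_module m n sc rho W0 W1"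
begin

lemma Mall: "vector_space sc \<and>
     module.subspace sc W0 \<and> module.subspace sc W1 \<and> W0 \<inter> W1 = {0} \<and>
     (\<forall>w. \<exists>a\<in>W0. \<exists>b\<in>W1. w = a + b) \<and>
     (\<forall>p\<in>idx m n. \<forall>q\<in>idx m n. Vector_Spaces.linear sc sc (rho p q)) \<and>
     (\<forall>p\<in>idx m n. \<forall>q\<in>idx m n.
        (if par m p = par m q then rho p q ` W0 \<subseteq> W0 \<and> rho p q ` W1 \<subseteq> W1
         else rho p q ` W0 \<subseteq> W1 \<and> rho p q ` W1 \<subseteq> W0)) \<and>
     (\<forall>p\<in>idx m n. \<forall>q\<in>idx m n. \<forall>r\<in>idx m n. \<forall>s\<in>idx m n. \<forall>w.
        rho p q (rho r s w)
          - sc (sgn_c ((par m p + par m q) * (par m r + par m s))) (rho r s (rho p q w))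
        = (if q = r then rho p s w else 0)
          - sc (sgn_c ((par m p + par m q) * (par m r + par m s)))
               (if p = s then rho r q w else 0))"
  using M unfolding glmn_module_def .

lemma vs: "vector_space sc" using Mall by (rule conjunct1)

interpretation V: vector_space sc by (rule vs)

lemma sub0: "module.subspace sc W0" using Mall by (elim conjE)
lemma sub1: "module.subspace sc W1" using Mall by (elim conjE)
lemma inter: "W0 \<inter> W1 = {0}" using Mall by (elim conjE)
lemma decomp: "\<exists>a\<in>W0. \<exists>b\<in>W1. w = a + b" using Mall by (elim conjE) (erule allE)

lemma lin: "p \<in> idx m n \<Longrightarrow> q \<in> idx m n \<Longrightarrow> Vector_Spaces.linear sc sc (rho p q)"
  using Mall by (elim conjE) (erule ballE, erule ballE, assumption, auto)

lemma rho_add: "p \<in> idx m n \<Longrightarrow> q \<in> idx m n \<Longrightarrow> rho p q (x + y) = rho p q x + rho p q y"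
  using lin[of p q] unfolding Vector_Spaces.linear_iff by blast
lemma rho_scale: "p \<in> idx m n \<Longrightarrow> q \<in> idx m n \<Longrightarrow> rho p q (sc c x) = sc c (rho p q x)"
  using lin[of p q] unfolding Vector_Spaces.linear_iff by blast
lemma rho_zero: "p \<in> idx m n \<Longrightarrow> q \<in> idx m n \<Longrightarrow> rho p q 0 = 0"
  using rho_scale[of p q 0 0] by simp

lemma homog: "p \<in> idx m n \<Longrightarrow> q \<in> idx m n \<Longrightarrow>
   (if par m p = par m q then rho p q ` W0 \<subseteq> W0 \<and> rho p q ` W1 \<subseteq> W1
         else rho p q ` W0 \<subseteq> W1 \<and> rho p q ` W1 \<subseteq> W0)"
  using Mall by (elim conjE) (erule ballE, erule ballE, assumption, auto)

lemma rel0: "p \<in> idx m n \<Longrightarrow> q \<in> idx m n \<Longrightarrow> r \<in> idx m n \<Longrightarrow> s \<in> idx m n \<Longrightarrow>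
        rho p q (rho r s w)
          - sc (sgn_c ((par m p + par m q) * (par m r + par m s))) (rho r s (rho p q w))
        = (if q = r then rho p s w else 0)
          - sc (sgn_c ((par m p + par m q) * (par m r + par m s)))
               (if p = s then rho r q w else 0)"
  using Mall by (elim conjE) (erule ballE, erule ballE, erule ballE, erule ballE, erule allE, assumption, auto)

lemma rel:
  assumes "p \<in> idx m n" "q \<in> idx m n" "r \<in> idx m n" "s \<in> idx m n"
  shows "rho p q (rho r s w) =
    ((if q = r then rho p s w else 0)
          - sc (sgn_c ((par m p + par m q) * (par m r + par m s)))
               (if p = s then rho r q w else 0))
    + sc (sgn_c ((par m p + par m q) * (par m r + par m s))) (rho r s (rho p q w))"
  using rel0[OF assms, of w] by (simp only: diff_eq_eq)

lemma gen_diff: "x \<in> gen_sub sc ops S \<Longrightarrow> y \<in> gen_sub sc ops S \<Longrightarrow> x - y \<in> gen_sub sc ops S"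
proof -
  assume x: "x \<in> gen_sub sc ops S" and y: "y \<in> gen_sub sc ops S"
  have "sc (-1) y \<in> gen_sub sc ops S" using y by (rule gen_sub.smul)
  moreover have "sc (-1) y = - y" by simp
  ultimately have "- y \<in> gen_sub sc ops S" by simp
  from gen_sub.add[OF x this] show ?thesis by simp
qed

lemma closure:
  assumes Neg: "Neg \<subseteq> idx m n \<times> idx m n" and Pos: "Pos \<subseteq> idx m n \<times> idx m n"
   and cover: "\<And>p q r s. (p,q)\<in>Pos \<Longrightarrow> (r,s)\<in>Neg \<Longrightarrow> q = r \<Longrightarrow> (p,s) \<in> Pos \<union> Neg"
   and cover2: "\<And>p q r s. (p,q)\<in>Pos \<Longrightarrow> (r,s)\<in>Neg \<Longrightarrow> p = s \<Longrightarrow> (r,q) \<in> Pos \<union> Neg"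
   and base: "\<And>p q x. (p,q)\<in>Pos \<Longrightarrow> x\<in>S \<Longrightarrow> rho p q x \<in> gen_sub sc ((\<lambda>(r,s). rho r s) ` Neg) S"
   and x: "x \<in> gen_sub sc ((\<lambda>(r,s). rho r s) ` Neg) S"
  shows "\<forall>(p,q)\<in>Pos. rho p q x \<in> gen_sub sc ((\<lambda>(r,s). rho r s) ` Neg) S"
  using x
proof (induction rule: gen_sub.induct)
  case (base x) then show ?case using assms(5) by blast
next
  case zero
  show ?case
  proof (intro ballI, clarify)
    fix p q assume "(p,q) \<in> Pos"
    with Pos have "p \<in> idx m n" "q \<in> idx m n" by auto
    then show "rho p q 0 \<in> gen_sub sc ((\<lambda>(r,s). rho r s) ` Neg) S"
      by (simp add: rho_zero gen_sub.zero)
  qed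
next
  case (add x y)
  show ?case
  proof (intro ballI, clarify)
    fix p q assume pq: "(p,q) \<in> Pos"
    with Pos have "p \<in> idx m n" "q \<in> idx m n" by auto
    then show "rho p q (x + y) \<in> gen_sub sc ((\<lambda>(r,s). rho r s) ` Neg) S"
      using add.IH pq by (auto simp add: rho_add intro!: gen_sub.add)
  qed
next
  case (smul x c)
  show ?case
  proof (intro ballI, clarify)
    fix p q assume pq: "(p,q) \<in> Pos"
    with Pos have "p \<in> idx m n" "q \<in> idx m n" by auto
    then show "rho p q (sc c x) \<in> gen_sub sc ((\<lambda>(r,s). rho r s) ` Neg) S"
      using smul.IH pq by (auto simp add: rho_scale intro!: gen_sub.smul)
  qed
next
  case (oper f x)
  let ?G = "gen_sub sc ((\<lambda>(r,s). rho r s) ` Neg) S"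
  from oper.hyps(1) obtain r s where rs: "(r,s) \<in> Neg" and f: "f = rho r s" by auto
  from rs Neg have r: "r \<in> idx m n" and s: "s \<in> idx m n" by auto
  have inG: "rho a b x \<in> ?G" if "(a,b) \<in> Pos \<union> Neg" for a b
  proof (cases "(a,b) \<in> Pos")
    case True then show ?thesis using oper.IH by auto
  next
    case False
    then have "(a,b) \<in> Neg" using that by auto
    then have "rho a b \<in> (\<lambda>(r,s). rho r s) ` Neg" by force
    then show ?thesis using oper.hyps(2) by (rule gen_sub.oper)
  qed
  show ?case
  proof (intro ballI, clarify)
    fix p q assume pq: "(p,q) \<in> Pos"
    with Pos have p: "p \<in> idx m n" and q: "q \<in> idx m n" by auto
    have t1: "(if q = r then rho p s x else 0) \<in> ?G"
      using inG[OF cover[OF pq rs]] by (auto intro: gen_sub.zero)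
    have t2: "(if p = s then rho r q x else 0) \<in> ?G"
      using inG[OF cover2[OF pq rs]] by (auto intro: gen_sub.zero)
    have "rho p q x \<in> ?G" using oper.IH pq by auto
    moreover have "rho r s \<in> (\<lambda>(r,s). rho r s) ` Neg" using rs by force
    ultimately have t3: "rho r s (rho p q x) \<in> ?G" by (rule gen_sub.oper[rotated])
    show "rho p q (f x) \<in> ?G"
      unfolding f rel[OF p q r s]
      by (intro gen_sub.add gen_diff gen_sub.smul t1 t2 t3)
  qed
qed

lemma rho_diff: "p \<in> idx m n \<Longrightarrow> q \<in> idx m n \<Longrightarrow> rho p q (x - y) = rho p q x - rho p q y"
proof -
  assume pq: "p \<in> idx m n" "q \<in> idx m n"
  have "rho p q (x - y) = rho p q (x + sc (-1) y)" by simp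
  also have "rho p q (x + sc (-1) y) = rho p q x + sc (-1) (rho p q y)" using pq by (simp only: rho_add rho_scale)
  also have "\<dots> = rho p q x - rho p q y" by simp
  finally show ?thesis .
qed

lemma graded:
  assumes ops: "ops \<subseteq> (\<lambda>(p,q). rho p q) ` (idx m n \<times> idx m n)"
    and base: "\<And>x. x \<in> S \<Longrightarrow> \<exists>a\<in>gen_sub sc ops S \<inter> W0. \<exists>b\<in>gen_sub sc ops S \<inter> W1. x = a + b"
    and x: "x \<in> gen_sub sc ops S"
  shows "\<exists>a\<in>gen_sub sc ops S \<inter> W0. \<exists>b\<in>gen_sub sc ops S \<inter> W1. x = a + b"
  using x
proof (induction rule: gen_sub.induct)
  case (base x) then show ?case using assms(2) by blast
next
  case zero
  have "(0::'w) \<in> W0" "(0::'w) \<in> W1" using V.subspace_0[OF sub0] V.subspace_0[OF sub1] by auto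
  moreover have "(0::'w) \<in> gen_sub sc ops S" by (rule gen_sub.zero)
  ultimately show ?case by (metis IntI add_0)
next
  case (add x y)
  then obtain a1 b1 a2 b2 where h: "a1 \<in> gen_sub sc ops S \<inter> W0" "b1 \<in> gen_sub sc ops S \<inter> W1" "x = a1 + b1"
     "a2 \<in> gen_sub sc ops S \<inter> W0" "b2 \<in> gen_sub sc ops S \<inter> W1" "y = a2 + b2" by blast
  have "a1 + a2 \<in> gen_sub sc ops S \<inter> W0" using gen_sub.add[of a1 sc ops S a2] V.subspace_add[OF sub0, of a1 a2] h by blast
  moreover have "b1 + b2 \<in> gen_sub sc ops S \<inter> W1" using gen_sub.add[of b1 sc ops S b2] V.subspace_add[OF sub1, of b1 b2] h by blast
  moreover have "x + y = (a1 + a2) + (b1 + b2)" using h by (simp add: algebra_simps)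
  ultimately show ?case by blast
next
  case (smul x c)
  then obtain a1 b1 where h: "a1 \<in> gen_sub sc ops S \<inter> W0" "b1 \<in> gen_sub sc ops S \<inter> W1" "x = a1 + b1" by blast
  have "sc c a1 \<in> gen_sub sc ops S \<inter> W0" using gen_sub.smul[of a1 sc ops S c] V.subspace_scale[OF sub0, of a1 c] h by blast
  moreover have "sc c b1 \<in> gen_sub sc ops S \<inter> W1" using gen_sub.smul[of b1 sc ops S c] V.subspace_scale[OF sub1, of b1 c] h by blast
  moreover have "sc c x = sc c a1 + sc c b1" using h by (simp add: V.scale_right_distrib)
  ultimately show ?case by blast
next
  case (oper f x)
  then obtain a1 b1 where h: "a1 \<in> gen_sub sc ops S \<inter> W0" "b1 \<in> gen_sub sc ops S \<inter> W1" "x = a1 + b1" by blast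
  have "f \<in> (\<lambda>(p,q). rho p q) ` (idx m n \<times> idx m n)" using oper.hyps(1) ops by (rule subsetD[rotated])
  then obtain pq where pq0: "pq \<in> idx m n \<times> idx m n" "f = (\<lambda>(p,q). rho p q) pq" by (rule imageE)
  obtain p q where "pq = (p,q)" by (cases pq)
  with pq0 have pq: "p \<in> idx m n" "q \<in> idx m n" and f: "f = rho p q" by auto
  have fa: "f a1 \<in> gen_sub sc ops S" "f b1 \<in> gen_sub sc ops S"
    using gen_sub.oper[OF oper.hyps(1)] h by blast+
  have fx: "f x = f a1 + f b1" using h pq f by (simp add: rho_add)
  note hg = homog[OF pq]
  show ?case
  proof (cases "par m p = par m q")
    case True
    then have "f a1 \<in> W0" "f b1 \<in> W1" using hg h f by auto
    then show ?thesis using fa fx by blast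
  next
    case False
    then have "f a1 \<in> W1" "f b1 \<in> W0" using hg h f by auto
    then show ?thesis using fa fx by (metis add.commute IntI)
  qed
qed

lemma irr_full:
  assumes irr: "glmn_irreducible m n sc rho W0 W1"
    and closed: "\<And>p q y. p \<in> idx m n \<Longrightarrow> q \<in> idx m n \<Longrightarrow> y \<in> gen_sub sc ops S \<Longrightarrow> rho p q y \<in> gen_sub sc ops S"
    and gr: "\<And>x. x \<in> gen_sub sc ops S \<Longrightarrow> \<exists>a\<in>gen_sub sc ops S \<inter> W0. \<exists>b\<in>gen_sub sc ops S \<inter> W1. x = a + b"
    and nz: "x0 \<in> gen_sub sc ops S" "x0 \<noteq> 0"
  shows "gen_sub sc ops S = UNIV"
proof -
  let ?G = "gen_sub sc ops S"
  have sub: "V.subspace ?G"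
  proof (rule V.subspaceI)
    show "0 \<in> ?G" by (rule gen_sub.zero)
    show "x + y \<in> ?G" if "x \<in> ?G" "y \<in> ?G" for x y using that by (rule gen_sub.add)
    show "sc c x \<in> ?G" if "x \<in> ?G" for c x using that by (rule gen_sub.smul)
  qed
  have cl: "\<forall>p\<in>idx m n. \<forall>q\<in>idx m n. rho p q ` ?G \<subseteq> ?G" using closed by blast
  have gr': "\<forall>w\<in>?G. \<exists>a\<in>?G \<inter> W0. \<exists>b\<in>?G \<inter> W1. w = a + b" using gr by blast
  from irr have "\<forall>S. V.subspace S \<and> (\<forall>p\<in>idx m n. \<forall>q\<in>idx m n. rho p q ` S \<subseteq> S) \<and>
          (\<forall>w\<in>S. \<exists>a\<in>S \<inter> W0. \<exists>b\<in>S \<inter> W1. w = a + b)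
          \<longrightarrow> S = {0} \<or> S = UNIV" unfolding glmn_irreducible_def by (elim conjE)
  then have "?G = {0} \<or> ?G = UNIV" using sub cl gr' by blast
  then show ?thesis using nz by blast
qed


lemma WV_shift:
  assumes wx: "WV m n sc rho Lam d x" and p: "p \<in> idx m n" and q: "q \<in> idx m n" and pq: "p \<noteq> q"
  shows "WV m n sc rho Lam (\<lambda>k. d k + (if k = p then 1 else 0) - (if k = q then 1 else 0)) (rho p q x)"
  unfolding WV_def
proof
  fix r assume r: "r \<in> idx m n"
  have th: "sgn_c ((par m r + par m r) * (par m p + par m q)) = 1" by (rule sgn_c_even)
  have rr: "rho r r x = sc (Lam r + of_int (d r)) x" using wx r unfolding WV_def by blast
  have "rho r r (rho p q x) = ((if r = p then rho r q x else 0) - sc 1 (if r = q then rho p r x else 0)) + sc 1 (rho p q (rho r r x))"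
    using rel[OF r r p q, of x] th by metis
  also have "\<dots> = (if r = p then rho p q x else 0) - (if r = q then rho p q x else 0) + sc (Lam r + of_int (d r)) (rho p q x)"
    using rr rho_scale[OF p q] by simp
  also have "\<dots> = sc (Lam r + of_int (d r + (if r = p then 1 else 0) - (if r = q then 1 else 0))) (rho p q x)"
  proof (cases "r = p")
    case True
    with pq have "r \<noteq> q" by auto
    with True show ?thesis by (simp add: V.scale_left_distrib add.commute)
  next
    case False
    then show ?thesis by (cases "r = q") (simp_all add: V.scale_left_distrib V.scale_left_diff_distrib)
  qed
  finally show "rho r r (rho p q x) = sc (Lam r + of_int (d r + (if r = p then 1 else 0) - (if r = q then 1 else 0))) (rho p q x)" .
qed

lemma Low_shift:
  assumes y: "y \<in> gen_sub sc {} (LowGen m n sc rho Lam K)"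
    and p: "p \<in> idx m n" and q: "q \<in> idx m n" and qp: "q < p"
  shows "rho p q y \<in> gen_sub sc {} (LowGen m n sc rho Lam (K + (m + n)))"
  using y
proof (induction rule: gen_sub.induct)
  case (base x)
  then obtain d where d: "WV m n sc rho Lam d x" "1 \<le> phi m n d" "phi m n d \<le> int K"
    unfolding LowGen_def by blast
  let ?d = "\<lambda>k. d k + (if k = p then 1 else 0) - (if k = q then 1 else 0)"
  have w: "WV m n sc rho Lam ?d (rho p q x)" using WV_shift[OF d(1) p q] qp by simp
  have ph: "phi m n ?d = phi m n d + int p - int q" by (rule phi_shift[OF p q])
  have "p \<le> m + n" using p by (simp add: idx_def)
  then have "1 \<le> phi m n ?d \<and> phi m n ?d \<le> int (K + (m + n))" using ph d qp by simp
  then have "rho p q x \<in> LowGen m n sc rho Lam (K + (m + n))" using w unfolding LowGen_def by blast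
  then show ?case by (rule gen_sub.base)
next
  case zero then show ?case by (simp add: rho_zero[OF p q] gen_sub.zero)
next
  case (add x y) then show ?case by (simp add: rho_add[OF p q] gen_sub.add)
next
  case (smul x c) then show ?case by (simp add: rho_scale[OF p q] gen_sub.smul)
next
  case (oper f x) then show ?case by simp
qed

lemma Low_mono:
  assumes "K \<le> K'"
  shows "gen_sub sc {} (LowGen m n sc rho Lam K) \<subseteq> gen_sub sc {} (LowGen m n sc rho Lam K')"
proof (rule gen_sub_mono_S)
  show "LowGen m n sc rho Lam K \<subseteq> LowGen m n sc rho Lam K'"
    using assms unfolding LowGen_def by force
qed

lemma H_add: "Hop m n sc rho (x + y) = Hop m n sc rho x + Hop m n sc rho y"
proof -
  have "Hop m n sc rho (x + y) = (\<Sum>k\<in>idx m n. sc (of_nat k) (rho k k x) + sc (of_nat k) (rho k k y))"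
    unfolding Hop_def by (rule sum.cong) (simp_all add: rho_add V.scale_right_distrib)
  then show ?thesis unfolding Hop_def by (simp add: sum.distrib)
qed

lemma H_scale: "Hop m n sc rho (sc c x) = sc c (Hop m n sc rho x)"
proof -
  have "Hop m n sc rho (sc c x) = (\<Sum>k\<in>idx m n. sc c (sc (of_nat k) (rho k k x)))"
    unfolding Hop_def by (rule sum.cong) (simp_all add: rho_scale mult.commute)
  then show ?thesis unfolding Hop_def by (simp add: V.scale_sum_right)
qed

lemma H_WV:
  assumes "WV m n sc rho Lam d x"
  shows "Hop m n sc rho x = sc ((\<Sum>k\<in>idx m n. of_nat k * Lam k) + of_int (phi m n d)) x"
proof -
  have "Hop m n sc rho x = (\<Sum>k\<in>idx m n. sc (of_nat k * (Lam k + of_int (d k))) x)"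
    unfolding Hop_def by (rule sum.cong) (use assms in \<open>simp_all add: WV_def\<close>)
  also have "\<dots> = sc (\<Sum>k\<in>idx m n. of_nat k * (Lam k + of_int (d k))) x"
    by (simp add: V.scale_sum_left)
  also have "(\<Sum>k\<in>idx m n. of_nat k * (Lam k + of_int (d k))) = (\<Sum>k\<in>idx m n. of_nat k * Lam k) + of_int (phi m n d)"
    by (simp add: phi_def algebra_simps sum.distrib)
  finally show ?thesis .
qed

lemma P_add: "Pop sc (Hop m n sc rho) c0 j (x + y) = Pop sc (Hop m n sc rho) c0 j x + Pop sc (Hop m n sc rho) c0 j y"
  by (induction j) (simp_all add: H_add V.scale_right_distrib algebra_simps)

lemma P_scale: "Pop sc (Hop m n sc rho) c0 j (sc c x) = sc c (Pop sc (Hop m n sc rho) c0 j x)"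
  by (induction j) (simp_all add: H_scale V.scale_right_diff_distrib mult.commute)

lemma P_zero: "Pop sc (Hop m n sc rho) c0 j 0 = 0"
  using P_scale[of c0 j 0 0] by simp

lemma P_WV:
  assumes w: "WV m n sc rho Lam d x"
  shows "Pop sc (Hop m n sc rho) (\<Sum>k\<in>idx m n. of_nat k * Lam k) j x
     = sc (\<Prod>i<j. (of_int (phi m n d) - of_nat (Suc i))) x"
proof (induction j)
  case 0 then show ?case by simp
next
  case (Suc j)
  let ?c0 = "\<Sum>k\<in>idx m n. of_nat k * Lam k"
  let ?pi = "\<Prod>i<j. (of_int (phi m n d) - of_nat (Suc i) :: complex)"
  have "Pop sc (Hop m n sc rho) ?c0 (Suc j) x = Hop m n sc rho (sc ?pi x) - sc (?c0 + of_nat (Suc j)) (sc ?pi x)"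
    using Suc by simp
  also have "\<dots> = sc (?pi * (?c0 + of_int (phi m n d))) x - sc ((?c0 + of_nat (Suc j)) * ?pi) x"
    by (simp add: H_scale H_WV[OF w])
  also have "\<dots> = sc (?pi * (of_int (phi m n d) - of_nat (Suc j))) x"
    by (simp add: V.scale_left_diff_distrib[symmetric] algebra_simps)
  finally show ?case by simp
qed

lemma P_kill:
  assumes y: "y \<in> gen_sub sc {} (LowGen m n sc rho Lam K)"
  shows "Pop sc (Hop m n sc rho) (\<Sum>k\<in>idx m n. of_nat k * Lam k) K y = 0"
  using y
proof (induction rule: gen_sub.induct)
  case (base x)
  then obtain d where d: "WV m n sc rho Lam d x" "1 \<le> phi m n d" "phi m n d \<le> int K"
    unfolding LowGen_def by blast
  define i where "i = nat (phi m n d) - 1"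
  have iK: "i < K" using d unfolding i_def by linarith
  have "of_nat (Suc i) = (of_int (phi m n d) :: complex)"
  proof -
    have "Suc i = nat (phi m n d)" using d unfolding i_def by linarith
    then have "int (Suc i) = phi m n d" using d by linarith
    then show ?thesis by (metis of_int_of_nat_eq)
  qed
  then have "(\<Prod>i<K. (of_int (phi m n d) - of_nat (Suc i) :: complex)) = 0"
    using iK by (auto intro!: bexI[of _ i])
  then show ?case using P_WV[OF d(1)] by simp
next
  case zero then show ?case by (rule P_zero)
next
  case (add x y) then show ?case by (simp add: P_add)
next
  case (smul x c) then show ?case by (simp add: P_scale)
next
  case (oper f x) then show ?case by simp
qed

lemma Low_WV0:
  assumes y: "y \<in> gen_sub sc {} (LowGen m n sc rho Lam K)" and w: "WV m n sc rho Lam (\<lambda>_. 0) y"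
  shows "y = 0"
proof -
  have ph: "phi m n (\<lambda>_. 0) = 0" by (simp add: phi_def)
  have "sc (\<Prod>i<K. (0 - of_nat (Suc i) :: complex)) y = 0"
    using P_WV[OF w, of K] P_kill[OF y] ph by simp
  moreover have "(\<Prod>i<K. (0 - of_nat (Suc i) :: complex)) \<noteq> 0"
    by (simp add: prod_zero_iff del: of_nat_Suc)
  ultimately show ?thesis by simp
qed

lemma unique_hw:
  assumes irr: "glmn_irreducible m n sc rho W0 W1"
    and ha1: "\<forall>p\<in>idx m n. rho p p a = sc (Lam p) a"
    and ha2: "\<forall>p\<in>idx m n. \<forall>q\<in>idx m n. p < q \<longrightarrow> rho p q a = 0"
    and anz: "a \<noteq> 0"
    and hb1: "\<forall>p\<in>idx m n. rho p p b = sc (Lam p) b"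
    and parab: "(a \<in> W0 \<and> b \<in> W1) \<or> (a \<in> W1 \<and> b \<in> W0)"
  shows "b = 0"
proof -
  define Neg where "Neg = {(p,q). p \<in> idx m n \<and> q \<in> idx m n \<and> q < p}"
  define Pos where "Pos = {(p,q). p \<in> idx m n \<and> q \<in> idx m n \<and> p \<le> q}"
  define ops where "ops = (\<lambda>(r,s). rho r s) ` Neg"
  let ?G = "gen_sub sc ops {a}"
  have a0: "a \<in> ?G" by (rule gen_sub.base) simp
  have cl1: "\<forall>(p,q)\<in>Pos. rho p q x \<in> ?G" if x: "x \<in> ?G" for x
    unfolding ops_def
  proof (rule closure)
    show "Neg \<subseteq> idx m n \<times> idx m n" unfolding Neg_def by auto
    show "Pos \<subseteq> idx m n \<times> idx m n" unfolding Pos_def by auto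
    show "(p,s) \<in> Pos \<union> Neg" if "(p,q) \<in> Pos" "(r,s) \<in> Neg" "q = r" for p q r s
      using that unfolding Pos_def Neg_def by auto
    show "(r,q) \<in> Pos \<union> Neg" if "(p,q) \<in> Pos" "(r,s) \<in> Neg" "p = s" for p q r s
      using that unfolding Pos_def Neg_def by auto
    show "rho p q y \<in> gen_sub sc ((\<lambda>(r,s). rho r s) ` Neg) {a}" if "(p,q) \<in> Pos" "y \<in> {a}" for p q y
    proof -
      have p: "p \<in> idx m n" "q \<in> idx m n" "p \<le> q" "y = a" using that unfolding Pos_def by auto
      show ?thesis
      proof (cases "p = q")
        case True
        then have "rho p q y = sc (Lam p) a" using ha1 p by simp
        then show ?thesis using gen_sub.smul[OF a0[unfolded ops_def]] by simp
      next
        case False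
        then have "rho p q y = 0" using ha2 p by simp
        then show ?thesis by (simp add: gen_sub.zero)
      qed
    qed
    show "x \<in> gen_sub sc ((\<lambda>(r,s). rho r s) ` Neg) {a}" using x unfolding ops_def .
  qed
  have closed: "rho p q y \<in> ?G" if "p \<in> idx m n" "q \<in> idx m n" "y \<in> ?G" for p q y
  proof (cases "p \<le> q")
    case True
    then have "(p,q) \<in> Pos" using that unfolding Pos_def by auto
    then show ?thesis using cl1[OF that(3)] by auto
  next
    case False
    then have "(p,q) \<in> Neg" using that unfolding Neg_def by auto
    then have "rho p q \<in> ops" unfolding ops_def by force
    then show ?thesis using that(3) by (rule gen_sub.oper)
  qed
  have z0: "(0::'w) \<in> W0" "(0::'w) \<in> W1" using V.subspace_0[OF sub0] V.subspace_0[OF sub1] by auto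
  have gr: "\<exists>a'\<in>?G \<inter> W0. \<exists>b'\<in>?G \<inter> W1. x = a' + b'" if "x \<in> ?G" for x
  proof (rule graded)
    show "ops \<subseteq> (\<lambda>(p,q). rho p q) ` (idx m n \<times> idx m n)" unfolding ops_def Neg_def by auto
    show "\<exists>a'\<in>?G \<inter> W0. \<exists>b'\<in>?G \<inter> W1. x = a' + b'" if "x \<in> {a}" for x
    proof -
      have "0 \<in> ?G" by (rule gen_sub.zero)
      then show ?thesis using that parab a0 z0 by (metis IntI add_0 add_0_right singletonD)
    qed
    show "x \<in> ?G" by fact
  qed
  have GU: "?G = UNIV" by (rule irr_full[OF irr closed gr a0 anz])
  have dec: "\<exists>c K y. y \<in> gen_sub sc {} (LowGen m n sc rho Lam K) \<and> x = sc c a + y" if "x \<in> ?G" for x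
    using that
  proof (induction rule: gen_sub.induct)
    case (base x)
    then have "x = sc 1 a + 0" by simp
    then show ?case by (blast intro: gen_sub.zero)
  next
    case zero
    have "(0::'w) = sc 0 a + 0" by simp
    then show ?case by (blast intro: gen_sub.zero)
  next
    case (add x y)
    then obtain c1 K1 y1 c2 K2 y2 where h: "y1 \<in> gen_sub sc {} (LowGen m n sc rho Lam K1)" "x = sc c1 a + y1"
      "y2 \<in> gen_sub sc {} (LowGen m n sc rho Lam K2)" "y = sc c2 a + y2" by blast
    have "y1 \<in> gen_sub sc {} (LowGen m n sc rho Lam (max K1 K2))" using Low_mono[of K1 "max K1 K2"] h(1) by auto
    moreover have "y2 \<in> gen_sub sc {} (LowGen m n sc rho Lam (max K1 K2))" using Low_mono[of K2 "max K1 K2"] h(3) by auto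
    ultimately have "y1 + y2 \<in> gen_sub sc {} (LowGen m n sc rho Lam (max K1 K2))" by (rule gen_sub.add)
    moreover have "x + y = sc (c1 + c2) a + (y1 + y2)" using h by (simp add: V.scale_left_distrib algebra_simps)
    ultimately show ?case by blast
  next
    case (smul x c)
    then obtain c1 K1 y1 where h: "y1 \<in> gen_sub sc {} (LowGen m n sc rho Lam K1)" "x = sc c1 a + y1" by blast
    have "sc c y1 \<in> gen_sub sc {} (LowGen m n sc rho Lam K1)" using h(1) by (rule gen_sub.smul)
    moreover have "sc c x = sc (c * c1) a + sc c y1" using h by (simp add: V.scale_right_distrib)
    ultimately show ?case by blast
  next
    case (oper f x)
    then obtain c1 K1 y1 where h: "y1 \<in> gen_sub sc {} (LowGen m n sc rho Lam K1)" "x = sc c1 a + y1" by blast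
    from oper.hyps(1) obtain pq where pq0: "pq \<in> Neg" "f = (\<lambda>(r,s). rho r s) pq" unfolding ops_def by (rule imageE)
    obtain p q where "pq = (p,q)" by (cases pq)
    with pq0 have p: "p \<in> idx m n" and q: "q \<in> idx m n" and qp: "q < p" and f: "f = rho p q"
      unfolding Neg_def by auto
    let ?K = "K1 + (m + n)"
    have wa: "WV m n sc rho Lam (\<lambda>_. 0) a" using ha1 unfolding WV_def by simp
    let ?d = "\<lambda>k. (0::int) + (if k = p then 1 else 0) - (if k = q then 1 else 0)"
    have w: "WV m n sc rho Lam ?d (rho p q a)" using WV_shift[OF wa p q] qp by simp
    have ph: "phi m n ?d = 0 + int p - int q" using phi_shift[OF p q, of "\<lambda>_. 0"] by (simp add: phi_def)
    have "p \<le> m + n" using p by (simp add: idx_def)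
    then have "1 \<le> phi m n ?d \<and> phi m n ?d \<le> int ?K" using ph qp by simp
    then have "rho p q a \<in> LowGen m n sc rho Lam ?K" using w unfolding LowGen_def by blast
    then have t1: "sc c1 (rho p q a) \<in> gen_sub sc {} (LowGen m n sc rho Lam ?K)" by (intro gen_sub.smul gen_sub.base)
    have t2: "rho p q y1 \<in> gen_sub sc {} (LowGen m n sc rho Lam ?K)" by (rule Low_shift[OF h(1) p q qp])
    have "f x = sc 0 a + (sc c1 (rho p q a) + rho p q y1)" using h f by (simp add: rho_add[OF p q] rho_scale[OF p q])
    then show ?case using gen_sub.add[OF t1 t2] by blast
  qed
  have "b \<in> ?G" using GU by simp
  then obtain c K y where y: "y \<in> gen_sub sc {} (LowGen m n sc rho Lam K)" and bd: "b = sc c a + y"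
    using dec by blast
  have ydef: "y = b - sc c a" using bd by simp
  have "WV m n sc rho Lam (\<lambda>_. 0) y" unfolding WV_def
  proof
    fix p assume p: "p \<in> idx m n"
    have "rho p p y = sc (Lam p) b - sc c (sc (Lam p) a)"
      unfolding ydef using p ha1 hb1 by (simp add: rho_diff rho_scale)
    also have "\<dots> = sc (Lam p) y" unfolding ydef by (simp add: V.scale_right_diff_distrib mult.commute)
    finally show "rho p p y = sc (Lam p + of_int 0) y" by simp
  qed
  then have "y = 0" by (rule Low_WV0[OF y])
  then have bca: "b = sc c a" using bd by simp
  show "b = 0"
  proof (cases "a \<in> W0 \<and> b \<in> W1")
    case True
    then have "b \<in> W0" using bca V.subspace_scale[OF sub0] by auto
    then show ?thesis using True inter by auto
  next
    case False
    then have "a \<in> W1 \<and> b \<in> W0" using parab by auto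
    moreover then have "b \<in> W1" using bca V.subspace_scale[OF sub1] by auto
    ultimately show ?thesis using inter by auto
  qed
qed

lemma decomp_unique:
  assumes "x0 \<in> W0" "y0 \<in> W0" "x1 \<in> W1" "y1 \<in> W1" "x0 + x1 = y0 + y1"
  shows "x0 = y0 \<and> x1 = y1"
proof -
  have e: "x0 - y0 = y1 - x1" using assms(5) by (simp add: algebra_simps)
  have "x0 - y0 \<in> W0" using V.subspace_diff[OF sub0 assms(1,2)] .
  moreover have "y1 - x1 \<in> W1" using V.subspace_diff[OF sub1 assms(4,3)] .
  ultimately have "x0 - y0 \<in> W0 \<inter> W1" using e by simp
  then have "x0 - y0 = 0" using inter by simp
  then show ?thesis using e by (metis eq_iff_diff_eq_0)
qed

lemma L0_img: "L0_ops m n rho = (\<lambda>(p,q). rho p q) ` {(p,q). p \<in> idx m n \<and> q \<in> idx m n \<and> par m p = par m q}"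
  unfolding L0_ops_def by force

lemma Lm_img: "Lminus_ops m n rho = (\<lambda>(r,s). rho r s) ` {(q,p). 1 \<le> p \<and> p \<le> m \<and> m < q \<and> q \<le> m + n}"
  unfolding Lminus_ops_def by force

lemma V0_full:
  assumes irr: "glmn_irreducible m n sc rho W0 W1" and hw: "hw_vector m n sc rho Lam v"
  shows "gen_sub sc (Lminus_ops m n rho) (V0 m n sc rho v) = UNIV"
proof -
  have vnz: "v \<noteq> 0" and hw1: "\<forall>p\<in>idx m n. rho p p v = sc (Lam p) v"
    and hw2: "\<forall>p\<in>idx m n. \<forall>q\<in>idx m n. p < q \<longrightarrow> rho p q v = 0"
    using hw unfolding hw_vector_def by blast+
  obtain a b where ab: "a \<in> W0" "b \<in> W1" "v = a + b" using decomp by blast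
  have z0: "(0::'w) \<in> W0" "(0::'w) \<in> W1" using V.subspace_0[OF sub0] V.subspace_0[OF sub1] by auto
  have hab1: "rho p p a = sc (Lam p) a \<and> rho p p b = sc (Lam p) b" if p: "p \<in> idx m n" for p
  proof (rule decomp_unique)
    have hg: "rho p p ` W0 \<subseteq> W0 \<and> rho p p ` W1 \<subseteq> W1" using homog[OF p p] by simp
    show "rho p p a \<in> W0" "rho p p b \<in> W1" using hg ab by auto
    show "sc (Lam p) a \<in> W0" using V.subspace_scale[OF sub0 ab(1)] .
    show "sc (Lam p) b \<in> W1" using V.subspace_scale[OF sub1 ab(2)] .
    show "rho p p a + rho p p b = sc (Lam p) a + sc (Lam p) b"
      using hw1 p ab(3) by (simp add: rho_add V.scale_right_distrib)
  qed
  have hab2: "rho p q a = 0 \<and> rho p q b = 0" if p: "p \<in> idx m n" and q: "q \<in> idx m n" and pq: "p < q" for p q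
  proof -
    have s: "rho p q a + rho p q b = 0" using hw2 p q pq ab(3) by (simp add: rho_add)
    show ?thesis
    proof (cases "par m p = par m q")
      case True
      then have "rho p q a \<in> W0" "rho p q b \<in> W1" using homog[OF p q] ab by auto
      then show ?thesis using decomp_unique[of "rho p q a" 0 "rho p q b" 0] s z0 by simp
    next
      case False
      then have "rho p q a \<in> W1" "rho p q b \<in> W0" using homog[OF p q] ab by auto
      then show ?thesis using decomp_unique[of "rho p q b" 0 "rho p q a" 0] s z0 by (simp add: add.commute)
    qed
  qed
  have hv: "v \<in> W0 \<or> v \<in> W1"
  proof (cases "a = 0")
    case True then show ?thesis using ab by simp
  next
    case False
    have "b = 0"
      by (rule unique_hw[where a=a and b=b and Lam=Lam, OF irr]) (use hab1 hab2 False ab in auto)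
    then show ?thesis using ab by simp
  qed
  define L0s where "L0s = {(p,q). p \<in> idx m n \<and> q \<in> idx m n \<and> par m p = par m q}"
  define Lms where "Lms = {(q,p). 1 \<le> p \<and> p \<le> m \<and> m < q \<and> q \<le> m + n}"
  define Pos where "Pos = (idx m n \<times> idx m n) - Lms"
  let ?V0 = "V0 m n sc rho v"
  let ?G = "gen_sub sc (Lminus_ops m n rho) ?V0"
  have V0eq: "?V0 = gen_sub sc ((\<lambda>(p,q). rho p q) ` L0s) {v}"
    unfolding V0_def L0_img L0s_def ..
  have Geq: "?G = gen_sub sc ((\<lambda>(r,s). rho r s) ` Lms) ?V0" unfolding Lm_img Lms_def ..
  have v0: "v \<in> ?V0" unfolding V0eq by (rule gen_sub.base) simp
  have ids: "1 \<le> p \<and> p \<le> m + n" if "p \<in> idx m n" for p using that by (simp add: idx_def)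
  have kill: "\<forall>p q. 1 \<le> p \<and> p \<le> m \<and> m < q \<and> q \<le> m + n \<longrightarrow> rho p q x = 0" if "x \<in> ?V0" for x
    using that unfolding V0eq
  proof (induction rule: gen_sub.induct)
    case (base x)
    show ?case
    proof (intro allI impI)
      fix p q assume pq: "1 \<le> p \<and> p \<le> m \<and> m < q \<and> q \<le> m + n"
      have p: "p \<in> idx m n" and q: "q \<in> idx m n" using pq by (auto simp: idx_def)
      have "p < q" using pq by linarith
      then show "rho p q x = 0" using hw2 p q base by simp
    qed
  next
    case zero
    show ?case
    proof (intro allI impI)
      fix p q assume pq: "1 \<le> p \<and> p \<le> m \<and> m < q \<and> q \<le> m + n"
      have p: "p \<in> idx m n" and q: "q \<in> idx m n" using pq by (auto simp: idx_def)
      show "rho p q 0 = 0" by (rule rho_zero[OF p q])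
    qed
  next
    case (add x y)
    show ?case
    proof (intro allI impI)
      fix p q assume pq: "1 \<le> p \<and> p \<le> m \<and> m < q \<and> q \<le> m + n"
      have p: "p \<in> idx m n" and q: "q \<in> idx m n" using pq by (auto simp: idx_def)
      have "rho p q x = 0" "rho p q y = 0" using add.IH pq by blast+
      then show "rho p q (x + y) = 0" by (simp add: rho_add[OF p q])
    qed
  next
    case (smul x c)
    show ?case
    proof (intro allI impI)
      fix p q assume pq: "1 \<le> p \<and> p \<le> m \<and> m < q \<and> q \<le> m + n"
      have p: "p \<in> idx m n" and q: "q \<in> idx m n" using pq by (auto simp: idx_def)
      have "rho p q x = 0" using smul.IH pq by blast
      then show "rho p q (sc c x) = 0" by (simp add: rho_scale[OF p q])
    qed
  next
    case (oper f x)
    from oper.hyps(1) obtain rs where rs0: "rs \<in> L0s" "f = (\<lambda>(r,s). rho r s) rs" by (rule imageE)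
    obtain r s where "rs = (r,s)" by (cases rs)
    with rs0 have r: "r \<in> idx m n" and s: "s \<in> idx m n" and prs: "par m r = par m s" and f: "f = rho r s"
      unfolding L0s_def by auto
    show ?case
    proof (intro allI impI)
      fix p q assume pq: "1 \<le> p \<and> p \<le> m \<and> m < q \<and> q \<le> m + n"
      have p: "p \<in> idx m n" and q: "q \<in> idx m n" using pq by (auto simp: idx_def)
      have t3: "rho p q x = 0" using oper.IH pq by blast
      have t1: "(if q = r then rho p s x else 0) = 0"
      proof (cases "q = r")
        case True
        have "par m q = 1" using pq by (simp add: par_def)
        then have "par m s = 1" using prs True by simp
        then have "m < s" by (simp add: par_def split: if_splits)
        moreover have "1 \<le> p \<and> p \<le> m" "s \<le> m + n" using pq s by (auto simp: idx_def)
        ultimately have "rho p s x = 0" using oper.IH by blast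
        then show ?thesis using True by simp
      qed simp
      have t2: "(if p = s then rho r q x else 0) = 0"
      proof (cases "p = s")
        case True
        have "par m p = 0" using pq by (simp add: par_def)
        then have "par m r = 0" using prs True by simp
        then have "r \<le> m" by (simp add: par_def split: if_splits)
        moreover have "1 \<le> r" "m < q \<and> q \<le> m + n" using pq r by (auto simp: idx_def)
        ultimately have "rho r q x = 0" using oper.IH by blast
        then show ?thesis using True by simp
      qed simp
      show "rho p q (f x) = 0" unfolding f rel[OF p q r s] t1 t2 t3 by (simp add: rho_zero[OF r s])
    qed
  qed
  have V0cl: "rho p q x \<in> ?V0" if "(p,q) \<in> L0s" "x \<in> ?V0" for p q x
  proof -
    have "rho p q \<in> (\<lambda>(p,q). rho p q) ` L0s" using that(1) by force
    then show ?thesis using that(2) unfolding V0eq by (rule gen_sub.oper)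
  qed
  have cl1: "\<forall>(p,q)\<in>Pos. rho p q x \<in> ?G" if x: "x \<in> ?G" for x
    unfolding Geq
  proof (rule closure)
    show "Lms \<subseteq> idx m n \<times> idx m n" unfolding Lms_def by (auto simp: idx_def)
    show "Pos \<subseteq> idx m n \<times> idx m n" unfolding Pos_def by auto
    show "(p,s) \<in> Pos \<union> Lms" if "(p,q) \<in> Pos" "(r,s) \<in> Lms" "q = r" for p q r s
      using that unfolding Pos_def Lms_def by (auto simp: idx_def)
    show "(r,q) \<in> Pos \<union> Lms" if "(p,q) \<in> Pos" "(r,s) \<in> Lms" "p = s" for p q r s
      using that unfolding Pos_def Lms_def by (auto simp: idx_def)
    show "rho p q y \<in> gen_sub sc ((\<lambda>(r,s). rho r s) ` Lms) ?V0" if "(p,q) \<in> Pos" "y \<in> ?V0" for p q y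
    proof (cases "par m p = par m q")
      case True
      then have "(p,q) \<in> L0s" using that(1) unfolding Pos_def L0s_def by auto
      then have "rho p q y \<in> ?V0" using V0cl that(2) by blast
      then show ?thesis by (rule gen_sub.base)
    next
      case False
      then have "1 \<le> p \<and> p \<le> m \<and> m < q \<and> q \<le> m + n"
        using that(1) unfolding Pos_def Lms_def by (auto simp: idx_def par_def split: if_splits)
      then have "rho p q y = 0" using kill[OF that(2)] by blast
      then show ?thesis by (simp add: gen_sub.zero)
    qed
    show "x \<in> gen_sub sc ((\<lambda>(r,s). rho r s) ` Lms) ?V0" using x unfolding Geq .
  qed
  have closed: "rho p q y \<in> ?G" if "p \<in> idx m n" "q \<in> idx m n" "y \<in> ?G" for p q y
  proof (cases "(p,q) \<in> Lms")
    case True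
    then have "rho p q \<in> Lminus_ops m n rho" unfolding Lm_img Lms_def by force
    then show ?thesis using that(3) by (rule gen_sub.oper)
  next
    case False
    then have "(p,q) \<in> Pos" using that unfolding Pos_def by auto
    then show ?thesis using cl1[OF that(3)] by auto
  qed
  have grV0: "\<exists>a'\<in>?V0 \<inter> W0. \<exists>b'\<in>?V0 \<inter> W1. x = a' + b'" if "x \<in> ?V0" for x
    unfolding V0eq
  proof (rule graded)
    show "(\<lambda>(p,q). rho p q) ` L0s \<subseteq> (\<lambda>(p,q). rho p q) ` (idx m n \<times> idx m n)" unfolding L0s_def by auto
    show "\<exists>a'\<in>gen_sub sc ((\<lambda>(p,q). rho p q) ` L0s) {v} \<inter> W0. \<exists>b'\<in>gen_sub sc ((\<lambda>(p,q). rho p q) ` L0s) {v} \<inter> W1. x = a' + b'"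
      if "x \<in> {v}" for x
    proof -
      have "0 \<in> gen_sub sc ((\<lambda>(p,q). rho p q) ` L0s) {v}" by (rule gen_sub.zero)
      then show ?thesis using that hv v0[unfolded V0eq] z0 by (metis IntI add_0 add_0_right singletonD)
    qed
    show "x \<in> gen_sub sc ((\<lambda>(p,q). rho p q) ` L0s) {v}" using that unfolding V0eq .
  qed
  have V0G: "?V0 \<subseteq> ?G" by (auto intro: gen_sub.base)
  have gr: "\<exists>a'\<in>?G \<inter> W0. \<exists>b'\<in>?G \<inter> W1. x = a' + b'" if "x \<in> ?G" for x
  proof (rule graded)
    show "Lminus_ops m n rho \<subseteq> (\<lambda>(p,q). rho p q) ` (idx m n \<times> idx m n)"
      unfolding Lm_img by (auto simp: idx_def)
    show "\<exists>a'\<in>?G \<inter> W0. \<exists>b'\<in>?G \<inter> W1. x = a' + b'" if "x \<in> ?V0" for x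
      using grV0[OF that] V0G by blast
    show "x \<in> ?G" by fact
  qed
  show ?thesis by (rule irr_full[OF irr closed gr]) (use V0G v0 vnz in auto)
qed

lemma tensor_full:
  assumes GU: "gen_sub sc (Lminus_ops m n rho) (V0 m n sc rho v) = UNIV"
  shows "tensor_space m n \<subseteq> gen_sub (tens_sc sc) (Lminus_ops m n (tens_act m n sc rho)) (tensor_V0 m n sc rho v)"
proof
  let ?T = "gen_sub (tens_sc sc) (Lminus_ops m n (tens_act m n sc rho)) (tensor_V0 m n sc rho v)"
  let ?G = "gen_sub sc (Lminus_ops m n rho) (V0 m n sc rho v)"
  define dl :: "nat \<Rightarrow> 'w \<Rightarrow> nat \<Rightarrow> 'w" where "dl s w = (\<lambda>r. if r = s then w else 0)" for s w
  have Tdiff: "x - y \<in> ?T" if "x \<in> ?T" "y \<in> ?T" for x y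
  proof -
    have "tens_sc sc (-1) y \<in> ?T" using that(2) by (rule gen_sub.smul)
    moreover have "tens_sc sc (-1) y = - y" unfolding tens_sc_def by (rule ext) simp
    ultimately have "- y \<in> ?T" by simp
    from gen_sub.add[OF that(1) this] show ?thesis by simp
  qed
  have dlT: "\<forall>s\<in>idx m n. dl s w \<in> ?T" if "w \<in> ?G" for w
    using that
  proof (induction rule: gen_sub.induct)
    case (base x)
    show ?case
    proof
      fix s assume s: "s \<in> idx m n"
      have z: "0 \<in> V0 m n sc rho v" unfolding V0_def by (rule gen_sub.zero)
      have "dl s x \<in> tensor_V0 m n sc rho v"
        unfolding tensor_V0_def tensor_space_def dl_def using s base z by auto
      then show "dl s x \<in> ?T" by (rule gen_sub.base)
    qed
  next
    case zero
    have dl0: "dl s 0 = 0" for s unfolding dl_def by (rule ext) simp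
    show ?case unfolding dl0 by (intro ballI gen_sub.zero)
  next
    case (add x y)
    have dla: "dl s (x + y) = dl s x + dl s y" for s unfolding dl_def by (rule ext) simp
    show ?case unfolding dla using add.IH by (blast intro: gen_sub.add)
  next
    case (smul x c)
    have "dl s (sc c x) = tens_sc sc c (dl s x)" for s unfolding dl_def tens_sc_def by (rule ext) simp
    then show ?case using smul.IH by (simp add: gen_sub.smul)
  next
    case (oper f y)
    from oper.hyps(1) obtain p q where pq: "1 \<le> p" "p \<le> m" "m < q" "q \<le> m + n" and f: "f = rho q p"
      unfolding Lminus_ops_def by blast
    have p: "p \<in> idx m n" and q: "q \<in> idx m n" using pq by (auto simp: idx_def)
    have pnq: "p \<noteq> q" using pq by simp
    show ?case
    proof
      fix s assume s: "s \<in> idx m n"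
      let ?E = "tens_act m n sc rho q p (dl s y)"
      let ?D = "if s = p then dl q y else 0"
      let ?sg = "sgn_c ((par m q + par m p) * par m s)"
      have "tens_act m n sc rho q p \<in> Lminus_ops m n (tens_act m n sc rho)"
        unfolding Lminus_ops_def using pq by blast
      then have E: "?E \<in> ?T" using oper.IH s by (blast intro: gen_sub.oper)
      have D: "?D \<in> ?T" using oper.IH q by (auto intro: gen_sub.zero)
      have sq: "sc ?sg (sc ?sg z) = z" for z using sgn_c_sq by simp
      have key: "dl s (f y) = tens_sc sc ?sg (?E - ?D)"
      proof (rule ext)
        fix r
        show "dl s (f y) r = tens_sc sc ?sg (?E - ?D) r"
          unfolding f dl_def tens_sc_def tens_act_def
          using s q p pnq sq rho_zero[OF q p]
          by (cases "r = s"; cases "r = q"; cases "s = p") auto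
      qed
      show "dl s (f y) \<in> ?T" unfolding key by (intro gen_sub.smul Tdiff E D)
    qed
  qed
  have sum_app: "(sum g A) r = (\<Sum>s\<in>A. g s r)" if "finite A" for g :: "nat \<Rightarrow> nat \<Rightarrow> 'w" and A r
    using that by (induction A rule: finite_induct) auto
  fix t :: "nat \<Rightarrow> 'w" assume t: "t \<in> tensor_space m n"
  have "t = (\<Sum>s\<in>idx m n. dl s (t s))"
  proof (rule ext)
    fix r
    have "(\<Sum>s\<in>idx m n. dl s (t s)) r = (\<Sum>s\<in>idx m n. if r = s then t s else 0)"
      by (simp add: sum_app finite_idx dl_def)
    also have "\<dots> = t r" using t finite_idx unfolding tensor_space_def by auto
    finally show "t r = (\<Sum>s\<in>idx m n. dl s (t s)) r" by simp
  qed
  moreover have "(\<Sum>s\<in>idx m n. dl s (t s)) \<in> ?T"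
    by (rule gen_sub_sum[OF finite_idx]) (use dlT GU in auto)
  ultimately show "t \<in> ?T" by simp
qed
end

theorem lemma7:
  fixes m n :: nat
    and sc :: "complex \<Rightarrow> 'w::ab_group_add \<Rightarrow> 'w"
    and rho :: "nat \<Rightarrow> nat \<Rightarrow> 'w \<Rightarrow> 'w"
    and W0 W1 :: "'w set"
    and Lam :: "nat \<Rightarrow> complex"
    and v :: 'w
  assumes "glmn_module m n sc rho W0 W1"
    and "fin_dim sc"
    and "glmn_irreducible m n sc rho W0 W1"
    and "hw_vector m n sc rho Lam v"
  shows "gen_sub (tens_sc sc) (L_ops m n (tens_act m n sc rho)) (tensor_V0 m n sc rho v)
           = tensor_space m n
       \<and> gen_sub (tens_sc sc) (Lminus_ops m n (tens_act m n sc rho)) (tensor_V0 m n sc rho v)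
           = tensor_space m n"
proof -
  interpret V: vector_space sc by (rule vs[OF assms(1)])
  let ?TM = "gen_sub (tens_sc sc) (Lminus_ops m n (tens_act m n sc rho)) (tensor_V0 m n sc rho v)"
  let ?TL = "gen_sub (tens_sc sc) (L_ops m n (tens_act m n sc rho)) (tensor_V0 m n sc rho v)"
  have GU: "gen_sub sc (Lminus_ops m n rho) (V0 m n sc rho v) = UNIV"
    by (rule V0_full[OF assms(1) assms(3) assms(4)])
  have s1: "tensor_space m n \<subseteq> ?TM" by (rule tensor_full[OF assms(1) GU])
  have s2: "?TM \<subseteq> ?TL"
  proof (rule gen_sub_mono_ops)
    show "Lminus_ops m n (tens_act m n sc rho) \<subseteq> L_ops m n (tens_act m n sc rho)"
      unfolding Lminus_ops_def L_ops_def idx_def by fastforce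
  qed
  have s3: "?TL \<subseteq> tensor_space m n"
  proof (rule gen_sub_minimal)
    show "tensor_V0 m n sc rho v \<subseteq> tensor_space m n" unfolding tensor_V0_def by blast
    show "0 \<in> tensor_space m n" unfolding tensor_space_def by simp
    show "x + y \<in> tensor_space m n" if "x \<in> tensor_space m n" "y \<in> tensor_space m n" for x y :: "nat \<Rightarrow> 'w"
      using that unfolding tensor_space_def by simp
    show "tens_sc sc c x \<in> tensor_space m n" if "x \<in> tensor_space m n" for c x
      using that unfolding tensor_space_def tens_sc_def by simp
    show "f x \<in> tensor_space m n" if "f \<in> L_ops m n (tens_act m n sc rho)" "x \<in> tensor_space m n" for f x
      using that(1) unfolding L_ops_def tensor_space_def tens_act_def by auto
  qed
  show ?thesis using s1 s2 s3 by blast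
qed

end
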